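(* Let $F:\mathbb C^n\to\mathbb C^n$ be a square system of polynomials, and let $I\in\mathbb{IC}^n$ be a strong interval approximate zero of $F$, witnessed by a point $\tilde x\in I$ and an invertible matrix $Y\in\mathbb C^{n\times n}$ (so that $K_{\tilde x,Y}(I)\subset I$ and $\sqrt2\,\lVert \mathbf 1_n - Y\cdot\square\mathrm JF(I)\rVert_\infty<1$). Let $x^*\in I$ be the unique zero of $F$ in $I$. Let $x\in I$ be any point, set $x_0:=x$ and $x_i:=x_{i-1}-Y\,F(x_{i-1})$ for $i\ge 1$. Then the sequence $(x_i)_{i\ge0}$ converges (at least linearly) to $x^*$.
   Context: $\mathbb{IR}$ is the set of compact real intervals $[a,b]$, with operations $X\circ Y=\{x\circ y: x\in X,y\in Y\}$ for $\circ\in\{+,-,\cdot,/\}$ ($0\notin Y$ for division). $\mathbb{IC}=\{X+iY: X,Y\in\mathbb{IR}\}$ is the set of rectangular complex intervals, where $X+iY=\{x+iy:x\in X,y\in Y\}$, with operations defined for $I=X+iY$, $J=W+iZ$ by $I\pm J=(X\pm W)+i(Y\pm Z)$, $I\cdot J=(X W-YZ)+i(XZ+YW)$, $I/J=\frac{XW+YZ}{WW+ZZ}+i\frac{YW-XZ}{WW+ZZ}$. Operations on $\mathbb{IC}^n$ are componentwise; for an interval matrix $A=(A_{i,j})\in\mathbb{IC}^{n\times n}$ and $I\in\mathbb{IC}^n$, $A\cdot I:=\sum_{j=1}^n I_j\cdot(A_{1,j},\dots,A_{n,j})^T$. A point $x\in\mathbb C^n$ is identified with the degenerate interval vector $[\mathrm{Re}\,x,\mathrm{Re}\,x]+i[\mathrm{Im}\,x,\mathrm{Im}\,x]$.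 An interval enclosure of a map $F:\mathbb C^n\to\mathbb C^m$ is a map $\square F:\mathbb{IC}^n\to\mathbb{IC}^m$ with $\{F(x):x\in I\}\subseteq\square F(I)$ for all $I$; $\square F$ and $\square\mathrm JF$ denote fixed interval enclosures of $F$ and of its Jacobian $\mathrm JF:\mathbb C^n\to\mathbb C^{n\times n}$. For $A\in\mathbb{IC}^{n\times n}$, $\lVert A\rVert_\infty:=\max_{B\in A}\max_{v\in\mathbb C^n\setminus\{0\}}\lVert Bv\rVert_\infty/\lVert v\rVert_\infty$ with $\lVert v\rVert_\infty=\max_i|v_i|$. For $I\in\mathbb{IC}^n$, $x\in\mathbb C^n$ and invertible $Y\in\mathbb C^{n\times n}$, the Krawczyk operator is $K_{x,Y}(I):=x-Y\cdot\square F(x)+(\mathbf 1_n-Y\cdot\square\mathrm JF(I))(I-x)$, where $\mathbf 1_n$ is the identity matrix. $I$ is a strong interval approximate zero of $F$ if there exist $x\in I$ and an invertible $Y\in\mathbb C^{n\times n}$ with $K_{x,Y}(I)\subset I$ and $\sqrt2\,\lVert\mathbf 1_n-Y\cdot\square\mathrm JF(I)\rVert_\infty<1$; such an $I$ contains exactly one zero of $F$. *)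

theory Defs
  imports "HOL-Analysis.Analysis"
begin

text \<open>A compact real interval is represented by its set of points.\<close>
type_synonym rint = "real set"

definition is_rint :: "rint \<Rightarrow> bool" where
  "is_rint X \<longleftrightarrow> (\<exists>a b. a \<le> b \<and> X = {a..b})"

definition radd :: "rint \<Rightarrow> rint \<Rightarrow> rint" where
  "radd X Y = {x + y | x y. x \<in> X \<and> y \<in> Y}"

definition rsub :: "rint \<Rightarrow> rint \<Rightarrow> rint" where
  "rsub X Y = {x - y | x y. x \<in> X \<and> y \<in> Y}"

definition rmul :: "rint \<Rightarrow> rint \<Rightarrow> rint" where
  "rmul X Y = {x * y | x y. x \<in> X \<and> y \<in> Y}"

text \<open>The pair (X, Y) stands for X + iY.\<close>
type_synonym cint = "rint \<times> rint"

definition is_cint :: "cint \<Rightarrow> bool" where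
  "is_cint I \<longleftrightarrow> is_rint (fst I) \<and> is_rint (snd I)"

definition cmem :: "complex \<Rightarrow> cint \<Rightarrow> bool" where
  "cmem z I \<longleftrightarrow> Re z \<in> fst I \<and> Im z \<in> snd I"

definition cpt :: "complex \<Rightarrow> cint" where
  "cpt z = ({Re z}, {Im z})"

definition cadd :: "cint \<Rightarrow> cint \<Rightarrow> cint" where
  "cadd I J = (radd (fst I) (fst J), radd (snd I) (snd J))"

definition csub :: "cint \<Rightarrow> cint \<Rightarrow> cint" where
  "csub I J = (rsub (fst I) (fst J), rsub (snd I) (snd J))"

definition cmul :: "cint \<Rightarrow> cint \<Rightarrow> cint" where
  "cmul I J = (rsub (rmul (fst I) (fst J)) (rmul (snd I) (snd J)),
               radd (rmul (fst I) (snd J)) (rmul (snd I) (fst J)))"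

text \<open>Finite iterated sum of complex intervals (interval addition is the Minkowski
  sum, hence associative and commutative); the empty sum is the point 0.\<close>
definition csum :: "('i \<Rightarrow> cint) \<Rightarrow> 'i list \<Rightarrow> cint" where
  "csum f xs = foldr (\<lambda>j acc. cadd (f j) acc) xs (cpt 0)"

definition idx :: "'n::finite list" where
  "idx = (SOME xs. distinct xs \<and> set xs = UNIV)"

definition ivec_valid :: "cint ^ 'n \<Rightarrow> bool" where
  "ivec_valid I \<longleftrightarrow> (\<forall>i. is_cint (I $ i))"

definition imat_valid :: "cint ^ 'n ^ 'm \<Rightarrow> bool" where
  "imat_valid A \<longleftrightarrow> (\<forall>i j. is_cint (A $ i $ j))"

definition vmem :: "complex ^ 'n \<Rightarrow> cint ^ 'n \<Rightarrow> bool" where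
  "vmem x I \<longleftrightarrow> (\<forall>i. cmem (x $ i) (I $ i))"

definition mmem :: "complex ^ 'n ^ 'm \<Rightarrow> cint ^ 'n ^ 'm \<Rightarrow> bool" where
  "mmem B A \<longleftrightarrow> (\<forall>i j. cmem (B $ i $ j) (A $ i $ j))"

definition vpt :: "complex ^ 'n \<Rightarrow> cint ^ 'n" where
  "vpt x = (\<chi> i. cpt (x $ i))"

definition mpt :: "complex ^ 'n ^ 'm \<Rightarrow> cint ^ 'n ^ 'm" where
  "mpt B = (\<chi> i j. cpt (B $ i $ j))"

definition vadd :: "cint ^ 'n \<Rightarrow> cint ^ 'n \<Rightarrow> cint ^ 'n" where
  "vadd I J = (\<chi> i. cadd (I $ i) (J $ i))"

definition vsub :: "cint ^ 'n \<Rightarrow> cint ^ 'n \<Rightarrow> cint ^ 'n" where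
  "vsub I J = (\<chi> i. csub (I $ i) (J $ i))"

definition msub :: "cint ^ 'n ^ 'm \<Rightarrow> cint ^ 'n ^ 'm \<Rightarrow> cint ^ 'n ^ 'm" where
  "msub A B = (\<chi> i j. csub (A $ i $ j) (B $ i $ j))"

definition mvmul :: "cint ^ 'n::finite ^ 'm \<Rightarrow> cint ^ 'n \<Rightarrow> cint ^ 'm" where
  "mvmul A I = (\<chi> i. csum (\<lambda>j. cmul (I $ j) (A $ i $ j)) idx)"

definition mmmul :: "cint ^ 'k::finite ^ 'm \<Rightarrow> cint ^ 'n ^ 'k \<Rightarrow> cint ^ 'n ^ 'm" where
  "mmmul A B = (\<chi> i j. csum (\<lambda>k. cmul (B $ k $ j) (A $ i $ k)) idx)"

definition mid :: "cint ^ 'n ^ 'n" where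
  "mid = mpt (mat 1)"

definition vnorm_inf :: "complex ^ 'n::finite \<Rightarrow> real" where
  "vnorm_inf v = Max (range (\<lambda>i. cmod (v $ i)))"

definition opnorm_inf :: "complex ^ 'n::finite ^ 'm::finite \<Rightarrow> real" where
  "opnorm_inf B = Sup {vnorm_inf (B *v v) / vnorm_inf v | v. v \<noteq> 0}"

definition inorm_inf :: "cint ^ 'n::finite ^ 'm::finite \<Rightarrow> real" where
  "inorm_inf A = Sup {opnorm_inf B | B. mmem B A}"

inductive cpoly :: "(complex ^ 'n \<Rightarrow> complex) \<Rightarrow> bool" where
  cpoly_const: "cpoly (\<lambda>x. c)"
| cpoly_var: "cpoly (\<lambda>x. x $ i)"
| cpoly_add: "cpoly f \<Longrightarrow> cpoly g \<Longrightarrow> cpoly (\<lambda>x. f x + g x)"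
| cpoly_mult: "cpoly f \<Longrightarrow> cpoly g \<Longrightarrow> cpoly (\<lambda>x. f x * g x)"

definition poly_system :: "(complex ^ 'n \<Rightarrow> complex ^ 'm) \<Rightarrow> bool" where
  "poly_system F \<longleftrightarrow> (\<forall>i. cpoly (\<lambda>x. F x $ i))"

definition is_jacobian :: "(complex ^ 'n \<Rightarrow> complex ^ 'm) \<Rightarrow> (complex ^ 'n \<Rightarrow> complex ^ 'n ^ 'm) \<Rightarrow> bool" where
  "is_jacobian F JF \<longleftrightarrow> (\<forall>x. (F has_derivative (\<lambda>h. JF x *v h)) (at x))"

definition vec_enclosure :: "(complex ^ 'n \<Rightarrow> complex ^ 'm) \<Rightarrow> (cint ^ 'n \<Rightarrow> cint ^ 'm) \<Rightarrow> bool" where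
  "vec_enclosure F FI \<longleftrightarrow>
     (\<forall>I. ivec_valid I \<longrightarrow> ivec_valid (FI I) \<and> (\<forall>x. vmem x I \<longrightarrow> vmem (F x) (FI I)))"

definition mat_enclosure :: "(complex ^ 'n \<Rightarrow> complex ^ 'k ^ 'm) \<Rightarrow> (cint ^ 'n \<Rightarrow> cint ^ 'k ^ 'm) \<Rightarrow> bool" where
  "mat_enclosure G GI \<longleftrightarrow>
     (\<forall>I. ivec_valid I \<longrightarrow> imat_valid (GI I) \<and> (\<forall>x. vmem x I \<longrightarrow> mmem (G x) (GI I)))"

definition krawczyk ::
  "(cint ^ 'n::finite \<Rightarrow> cint ^ 'n) \<Rightarrow> (cint ^ 'n \<Rightarrow> cint ^ 'n ^ 'n) \<Rightarrow>
   complex ^ 'n \<Rightarrow> complex ^ 'n ^ 'n \<Rightarrow> cint ^ 'n \<Rightarrow> cint ^ 'n" where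
  "krawczyk FI JFI x Y I =
     vadd (vsub (vpt x) (mvmul (mpt Y) (FI (vpt x))))
          (mvmul (msub mid (mmmul (mpt Y) (JFI I))) (vsub I (vpt x)))"

definition ivec_subset :: "cint ^ 'n \<Rightarrow> cint ^ 'n \<Rightarrow> bool" where
  "ivec_subset J I \<longleftrightarrow> (\<forall>i. fst (J $ i) \<subseteq> fst (I $ i) \<and> snd (J $ i) \<subseteq> snd (I $ i))"

end

theory Submission
  imports Defs
begin


lemma cmem_cpt: "cmem z (cpt z)" by (simp add: cmem_def cpt_def)

lemma cmem_add: "cmem u U \<Longrightarrow> cmem v V \<Longrightarrow> cmem (u + v) (cadd U V)"
  by (auto simp: cmem_def cadd_def radd_def)

lemma cmem_sub: "cmem u U \<Longrightarrow> cmem v V \<Longrightarrow> cmem (u - v) (csub U V)"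
  by (auto simp: cmem_def csub_def rsub_def)

lemma cmem_mul: "cmem u U \<Longrightarrow> cmem v V \<Longrightarrow> cmem (u * v) (cmul U V)"
  by (auto simp: cmem_def cmul_def rsub_def radd_def rmul_def)

lemma cmem_csum: "(\<And>j. cmem (f j) (FF j)) \<Longrightarrow> cmem (sum_list (map f xs)) (csum FF xs)"
proof (induction xs)
  case Nil then show ?case by (simp add: csum_def cmem_cpt[of 0, simplified])
next
  case (Cons a xs) then show ?case by (simp add: csum_def cmem_add)
qed

lemma idx_prop: "distinct (idx::'n::finite list) \<and> set (idx::'n list) = UNIV"
  proof -
  obtain xs :: "'n list" where "set xs = UNIV \<and> distinct xs" using finite_distinct_list[of "UNIV::'n set"] by auto
  then have "distinct xs \<and> set xs = UNIV" by auto
  then show ?thesis unfolding idx_def by (rule someI[of "\<lambda>ys::'n list. distinct ys \<and> set ys = UNIV" xs])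
qed

lemma sum_idx: "sum f (UNIV::'n::finite set) = sum_list (map f (idx::'n list))"
  using idx_prop[where 'n='n] sum.distinct_set_conv_list[of "idx::'n list" f] by metis

lemma mmem_mpt: "mmem B (mpt B)" by (simp add: mmem_def mpt_def cmem_cpt)
lemma vmem_vpt: "vmem x (vpt x)" by (simp add: vmem_def vpt_def cmem_cpt)

lemma vmem_add: "vmem u U \<Longrightarrow> vmem v V \<Longrightarrow> vmem (u + v) (vadd U V)"
  by (simp add: vmem_def vadd_def cmem_add)
lemma vmem_sub: "vmem u U \<Longrightarrow> vmem v V \<Longrightarrow> vmem (u - v) (vsub U V)"
  by (simp add: vmem_def vsub_def cmem_sub)
lemma mmem_sub: "mmem u U \<Longrightarrow> mmem v V \<Longrightarrow> mmem (u - v) (msub U V)"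
  by (simp add: mmem_def msub_def cmem_sub)

lemma vmem_mv: "mmem B A \<Longrightarrow> vmem v V \<Longrightarrow> vmem (B *v v) (mvmul A V)"
  unfolding vmem_def mvmul_def matrix_vector_mult_def
  by (auto simp: sum_idx mmem_def mult.commute intro!: cmem_csum cmem_mul)

lemma mmem_mm: "mmem A AI \<Longrightarrow> mmem B BI \<Longrightarrow> mmem (A ** B) (mmmul AI BI)"
  unfolding mmem_def mmmul_def matrix_matrix_mult_def
  by (auto simp: sum_idx mult.commute[of "A $ _ $ _"] intro!: cmem_csum cmem_mul)



definition rb :: "real set \<Rightarrow> bool" where "rb X \<longleftrightarrow> (\<exists>K\<ge>0. \<forall>x\<in>X. \<bar>x\<bar> \<le> K)"
definition cb :: "cint \<Rightarrow> bool" where "cb I \<longleftrightarrow> rb (fst I) \<and> rb (snd I)"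

lemma rb_add: "rb X \<Longrightarrow> rb Y \<Longrightarrow> rb (radd X Y)"
  unfolding rb_def radd_def
  by (clarsimp, rule_tac x="K+Ka" in exI, auto intro!: order.trans[OF abs_triangle_ineq] add_mono)

lemma rb_sub: "rb X \<Longrightarrow> rb Y \<Longrightarrow> rb (rsub X Y)"
  unfolding rb_def rsub_def
  by (clarsimp, rule_tac x="K+Ka" in exI, auto intro!: order.trans[OF abs_triangle_ineq4] add_mono)

lemma rb_mul: "rb X \<Longrightarrow> rb Y \<Longrightarrow> rb (rmul X Y)"
  unfolding rb_def rmul_def
  by (clarsimp, rule_tac x="K*Ka" in exI, auto simp: abs_mult intro!: mult_mono)

lemma cb_add: "cb X \<Longrightarrow> cb Y \<Longrightarrow> cb (cadd X Y)"
  by (simp add: cb_def cadd_def rb_add)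
lemma cb_sub: "cb X \<Longrightarrow> cb Y \<Longrightarrow> cb (csub X Y)"
  by (simp add: cb_def csub_def rb_sub)
lemma cb_mul: "cb X \<Longrightarrow> cb Y \<Longrightarrow> cb (cmul X Y)"
  by (simp add: cb_def cmul_def rb_sub rb_add rb_mul)
lemma cb_cpt: "cb (cpt z)"
  unfolding cb_def rb_def cpt_def by (auto intro: exI[of _ "\<bar>Re z\<bar>"] exI[of _ "\<bar>Im z\<bar>"])
lemma cb_csum: "(\<And>j. cb (FF j)) \<Longrightarrow> cb (csum FF xs)"
  by (induction xs) (auto simp: csum_def cb_cpt cb_add)

lemma rb_rint: "is_rint X \<Longrightarrow> rb X"
  unfolding is_rint_def rb_def
  by (clarsimp, rule_tac x="max \<bar>a\<bar> \<bar>b\<bar>" in exI, auto)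

lemma cb_cint: "is_cint X \<Longrightarrow> cb X"
  by (simp add: is_cint_def cb_def rb_rint)

lemma cb_cmem: "cb X \<Longrightarrow> \<exists>K\<ge>0. \<forall>z. cmem z X \<longrightarrow> cmod z \<le> K"
proof -
  assume "cb X"
  then obtain K1 K2 where k: "K1 \<ge> 0" "K2 \<ge> 0" "\<forall>x\<in>fst X. \<bar>x\<bar> \<le> K1" "\<forall>x\<in>snd X. \<bar>x\<bar> \<le> K2"
    unfolding cb_def rb_def by blast
  show ?thesis
  proof (rule exI[of _ "K1+K2"], intro conjI allI impI)
    fix z assume "cmem z X"
    then have "\<bar>Re z\<bar> \<le> K1" "\<bar>Im z\<bar> \<le> K2" using k unfolding cmem_def by auto
    then show "cmod z \<le> K1 + K2" using cmod_le[of z] by linarith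
  qed (use k in auto)
qed

lemma mat_bound:
  fixes A :: "cint ^ 'n::finite ^ 'm::finite"
  assumes "\<And>i j. cb (A $ i $ j)"
  shows "\<exists>K\<ge>0. \<forall>B. mmem B A \<longrightarrow> (\<forall>i j. cmod (B $ i $ j) \<le> K)"
proof -
  have "\<forall>i j. \<exists>K\<ge>0. \<forall>z. cmem z (A $ i $ j) \<longrightarrow> cmod z \<le> K" using assms cb_cmem by blast
  then obtain Kf where Kf: "\<And>i j. Kf i j \<ge> 0" "\<And>i j z. cmem z (A $ i $ j) \<Longrightarrow> cmod z \<le> Kf i j"
    by metis
  define K where "K = (\<Sum>i\<in>UNIV. \<Sum>j\<in>UNIV. Kf i j)"
  have le: "Kf i j \<le> K" for i j
  proof -
    have "Kf i j \<le> (\<Sum>j\<in>UNIV. Kf i j)" by (rule member_le_sum) (auto simp: Kf)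
    also have "\<dots> \<le> K" unfolding K_def by (rule member_le_sum) (auto intro!: sum_nonneg Kf)
    finally show ?thesis .
  qed
  show ?thesis
    by (rule exI[of _ K]) (auto simp: mmem_def K_def intro!: sum_nonneg Kf order.trans[OF Kf(2) le[unfolded K_def]])
qed



lemma vnorm_ge: "cmod (v $ i) \<le> vnorm_inf v"
  unfolding vnorm_inf_def by (rule Max_ge) auto

lemma vnorm_le: "(\<And>i. cmod (v $ i) \<le> K) \<Longrightarrow> vnorm_inf v \<le> K"
  unfolding vnorm_inf_def by (subst Max_le_iff) auto

lemma vnorm_nonneg: "0 \<le> vnorm_inf v"
  using vnorm_ge[of v] norm_ge_zero order.trans by blast

lemma vnorm_pos: "v \<noteq> 0 \<Longrightarrow> 0 < vnorm_inf v"
proof -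
  assume "v \<noteq> 0"
  then obtain i where "v $ i \<noteq> 0" by (metis vec_eq_iff zero_index)
  then have "0 < cmod (v $ i)" by simp
  then show ?thesis using vnorm_ge[of v i] by linarith
qed

lemma row_bound:
  fixes B :: "complex ^ 'n::finite ^ 'm::finite"
  shows "cmod ((B *v v) $ i) \<le> (\<Sum>j\<in>UNIV. cmod (B $ i $ j)) * vnorm_inf v"
proof -
  have "cmod ((B *v v) $ i) = cmod (\<Sum>j\<in>UNIV. B $ i $ j * v $ j)"
    by (simp add: matrix_vector_mult_def)
  also have "\<dots> \<le> (\<Sum>j\<in>UNIV. cmod (B $ i $ j * v $ j))" by (rule norm_sum)
  also have "\<dots> \<le> (\<Sum>j\<in>UNIV. cmod (B $ i $ j) * vnorm_inf v)"
    by (rule sum_mono) (auto simp: norm_mult intro!: mult_left_mono vnorm_ge)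
  finally show ?thesis by (simp add: sum_distrib_right)
qed

lemma mv_bound:
  fixes B :: "complex ^ 'n::finite ^ 'm::finite"
  assumes "\<And>i j. cmod (B $ i $ j) \<le> (K::real)"
  shows "vnorm_inf (B *v v) \<le> (real CARD('n) * K) * vnorm_inf v"
proof (rule vnorm_le)
  fix i
  have "(\<Sum>j\<in>UNIV. cmod (B $ i $ j)) \<le> (\<Sum>j\<in>(UNIV::'n set). K)" by (rule sum_mono) (use assms in auto)
  then have "(\<Sum>j\<in>UNIV. cmod (B $ i $ j)) * vnorm_inf v \<le> (real CARD('n) * K) * vnorm_inf v"
    by (intro mult_right_mono vnorm_nonneg) auto
  then show "cmod ((B *v v) $ i) \<le> (real CARD('n) * K) * vnorm_inf v"
    using row_bound[of B v i] by linarith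
qed

lemma entry_bound:
  fixes B :: "complex ^ 'n::finite ^ 'm::finite"
  shows "\<exists>K. \<forall>i j. cmod (B $ i $ j) \<le> K"
proof (rule exI, intro allI)
  fix i j
  have "cmod (B $ i $ j) \<le> (\<Sum>j\<in>UNIV. cmod (B $ i $ j))" by (rule member_le_sum) auto
  also have "\<dots> \<le> (\<Sum>i\<in>UNIV. \<Sum>j\<in>UNIV. cmod (B $ i $ j))"
    by (rule member_le_sum) (auto intro: sum_nonneg)
  finally show "cmod (B $ i $ j) \<le> (\<Sum>i\<in>UNIV. \<Sum>j\<in>UNIV. cmod (B $ i $ j))" .
qed

lemma ratio_bound:
  fixes B :: "complex ^ 'n::finite ^ 'm::finite"
  assumes "\<And>i j. cmod (B $ i $ j) \<le> (K::real)"
    and "r \<in> {vnorm_inf (B *v v) / vnorm_inf v | v. v \<noteq> 0}"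
  shows "r \<le> real CARD('n) * K"
proof -
  obtain v where v: "v \<noteq> 0" "r = vnorm_inf (B *v v) / vnorm_inf v" using assms(2) by blast
  then have p: "0 < vnorm_inf v" by (intro vnorm_pos)
  show ?thesis
    using mv_bound[OF assms(1), of v] p v(2) by (simp add: divide_le_eq)
qed

lemma opnorm_bound:
  fixes B :: "complex ^ 'n::finite ^ 'm::finite"
  shows "vnorm_inf (B *v v) \<le> opnorm_inf B * vnorm_inf v"
proof (cases "v = 0")
  case True
  then show ?thesis by (simp add: vnorm_inf_def)
next
  case False
  obtain K where K: "\<forall>i j. cmod (B $ i $ j) \<le> K" using entry_bound by blast
  have "vnorm_inf (B *v v) / vnorm_inf v \<le> opnorm_inf B"
    unfolding opnorm_inf_def
    by (rule cSup_upper) (use False ratio_bound[of B K] K in \<open>auto simp: bdd_above_def\<close>)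
  then show ?thesis using vnorm_pos[OF False] by (simp add: divide_le_eq mult.commute)
qed

lemma opnorm_le:
  fixes B :: "complex ^ 'n::finite ^ 'm::finite"
  assumes "\<And>i j. cmod (B $ i $ j) \<le> (K::real)"
  shows "opnorm_inf B \<le> real CARD('n) * K"
  unfolding opnorm_inf_def
proof (rule cSup_least)
  have "((\<chi> i. 1) :: complex ^ 'n) \<noteq> 0" by (metis one_neq_zero vec_lambda_beta zero_index)
  then show "{vnorm_inf (B *v v) / vnorm_inf v |v. v \<noteq> 0} \<noteq> {}" by blast
qed (use ratio_bound[of B K, OF assms] in blast)



lemma mv_scaleR: "(Y::complex^'n::finite^'m) *v (c *\<^sub>R v) = c *\<^sub>R (Y *v v)"
  by (simp add: matrix_vector_mult_def vec_eq_iff scaleR_sum_right mult_scaleR_right)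

lemma mvt_comp:
  fixes F :: "complex ^ 'n::finite \<Rightarrow> complex ^ 'n"
    and JF :: "complex ^ 'n \<Rightarrow> complex ^ 'n ^ 'n"
    and Y :: "complex ^ 'n ^ 'n" and L :: "complex \<Rightarrow> real"
  assumes jac: "is_jacobian F JF" and L: "bounded_linear L"
  shows "\<exists>t. 0 < t \<and> t < 1 \<and>
     L (((b - Y *v F b) - (a - Y *v F a)) $ i) =
     L (((mat 1 - Y ** JF (a + t *\<^sub>R (b - a))) *v (b - a)) $ i)"
proof -
  define d where "d = b - a"
  define G where "G = (\<lambda>z. z - Y *v F z)"
  define \<phi> where "\<phi> = (\<lambda>t. L (G (a + t *\<^sub>R d) $ i))"
  define D where "D = (\<lambda>t. L (((mat 1 - Y ** JF (a + t *\<^sub>R d)) *v d) $ i))"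
  have der: "DERIV \<phi> t :> D t" for t
  proof -
    let ?z = "a + t *\<^sub>R d"
    have l: "((\<lambda>t. a + t *\<^sub>R d) has_derivative (\<lambda>h. h *\<^sub>R d)) (at t)"
      by (auto intro!: derivative_eq_intros)
    have f: "(F has_derivative (\<lambda>h. JF ?z *v h)) (at ?z)" using jac by (simp add: is_jacobian_def)
    have g: "(G has_derivative (\<lambda>h. h - Y *v (JF ?z *v h))) (at ?z)"
      unfolding G_def
      by (intro has_derivative_diff has_derivative_ident
          bounded_linear.has_derivative[OF matrix_vector_mul_bounded_linear f])
    have gl: "((\<lambda>t. G (a + t *\<^sub>R d)) has_derivative (\<lambda>h. h *\<^sub>R d - Y *v (JF ?z *v (h *\<^sub>R d)))) (at t)"
      using has_derivative_compose[OF l g] by simp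
    have bl: "bounded_linear (\<lambda>v::complex^'n. L (v $ i))"
      using bounded_linear_compose[OF L bounded_linear_vec_nth[of i]] by (simp add: o_def)
    have "(\<phi> has_derivative (\<lambda>h. L ((h *\<^sub>R d - Y *v (JF ?z *v (h *\<^sub>R d))) $ i))) (at t)"
      unfolding \<phi>_def using bounded_linear.has_derivative[OF bl gl] by simp
    moreover have "(\<lambda>h. L ((h *\<^sub>R d - Y *v (JF ?z *v (h *\<^sub>R d))) $ i)) = (\<lambda>h. h * D t)"
    proof
      fix h
      have "h *\<^sub>R d - Y *v (JF ?z *v (h *\<^sub>R d)) = h *\<^sub>R ((mat 1 - Y ** JF ?z) *v d)"
        by (simp add: mv_scaleR matrix_vector_mult_diff_rdistrib matrix_vector_mul_assoc scaleR_diff_right)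
      then show "L ((h *\<^sub>R d - Y *v (JF ?z *v (h *\<^sub>R d))) $ i) = h * D t"
        by (simp add: D_def linear.scaleR[OF bounded_linear.linear[OF L]])
    qed
    moreover have e: "(*) (D t) = (\<lambda>h. h * D t)" by (auto simp: mult.commute)
    ultimately show ?thesis unfolding has_field_derivative_def e by simp
  qed
  obtain t where t: "0 < t" "t < 1" "\<phi> 1 - \<phi> 0 = (1 - 0) * D t"
    using MVT2[of 0 1 \<phi> D] der by auto
  have "\<phi> 1 - \<phi> 0 = L (((b - Y *v F b) - (a - Y *v F a)) $ i)"
    unfolding \<phi>_def G_def d_def using linear_diff[OF bounded_linear.linear[OF L]] by simp
  then show ?thesis using t unfolding D_def d_def by auto
qed



lemma seg_mem:
  assumes "ivec_valid I" "vmem a I" "vmem b I" "0 \<le> t" "t \<le> 1"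
  shows "vmem (a + t *\<^sub>R (b - a)) I"
  unfolding vmem_def cmem_def
proof (intro allI conjI)
  fix i
  obtain l u l' u' where lu: "fst (I $ i) = {l..u}" "snd (I $ i) = {l'..u'}"
    using assms(1) unfolding ivec_valid_def is_cint_def is_rint_def by metis
  have ab: "Re (a$i) \<in> {l..u}" "Re (b$i) \<in> {l..u}" "Im (a$i) \<in> {l'..u'}" "Im (b$i) \<in> {l'..u'}"
    using assms(2,3) lu unfolding vmem_def cmem_def by auto
  have cv: "x + t * (y - x) \<in> {p..q}" if "x \<in> {p..q}" "y \<in> {p..q}" for x y p q :: real
  proof -
    have "x + t * (y - x) = (1 - t) * x + t * y" by algebra
    moreover have "(1 - t) * x + t * y \<ge> (1 - t) * p + t * p"
      using that assms(4,5) by (intro add_mono mult_left_mono) auto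
    moreover have "(1 - t) * x + t * y \<le> (1 - t) * q + t * q"
      using that assms(4,5) by (intro add_mono mult_left_mono) auto
    ultimately show ?thesis by (auto simp: algebra_simps)
  qed
  show "Re ((a + t *\<^sub>R (b - a)) $ i) \<in> fst (I $ i)"
    using cv[OF ab(1,2)] lu by simp
  show "Im ((a + t *\<^sub>R (b - a)) $ i) \<in> snd (I $ i)"
    using cv[OF ab(3,4)] lu by simp
qed

lemma cmod_le_sqrt2:
  assumes "\<bar>Re w\<bar> \<le> K" "\<bar>Im w\<bar> \<le> K"
  shows "cmod w \<le> sqrt 2 * K"
proof -
  have K: "0 \<le> K" using assms by linarith
  have "(Re w)^2 \<le> K^2" using power_mono[OF assms(1), of 2] by simp
  moreover have "(Im w)^2 \<le> K^2" using power_mono[OF assms(2), of 2] by simp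
  ultimately
  have "cmod w \<le> sqrt (2 * K^2)" unfolding cmod_def by (intro real_sqrt_le_mono) auto
  also have "\<dots> = sqrt 2 * K" using K by (simp add: real_sqrt_mult)
  finally show ?thesis .
qed



theorem proposition4p9:
  fixes F :: "complex ^ 'n::finite \<Rightarrow> complex ^ 'n"
    and JF :: "complex ^ 'n \<Rightarrow> complex ^ 'n ^ 'n"
    and FI :: "cint ^ 'n \<Rightarrow> cint ^ 'n"
    and JFI :: "cint ^ 'n \<Rightarrow> cint ^ 'n ^ 'n"
    and I :: "cint ^ 'n"
    and xt xstar x :: "complex ^ 'n"
    and Y :: "complex ^ 'n ^ 'n"
    and xs :: "nat \<Rightarrow> complex ^ 'n"
  assumes "poly_system F"
    and "is_jacobian F JF"
    and "vec_enclosure F FI"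
    and "mat_enclosure JF JFI"
    and "ivec_valid I"
    and "vmem xt I"
    and "invertible Y"
    and "ivec_subset (krawczyk FI JFI xt Y I) I"
    and "sqrt 2 * inorm_inf (msub mid (mmmul (mpt Y) (JFI I))) < 1"
    and "vmem xstar I" and "F xstar = 0"
    and "vmem x I"
    and "xs 0 = x"
    and "\<And>i. xs (Suc i) = xs i - Y *v F (xs i)"
  shows "xs \<longlonglongrightarrow> xstar
    \<and> (\<exists>c C. 0 \<le> c \<and> c < 1 \<and> (\<forall>i. vnorm_inf (xs i - xstar) \<le> C * c ^ i))"
proof -
  note jac = assms(2) and valid = assms(5)
  define A where "A = msub mid (mmmul (mpt Y) (JFI I))"
  define \<rho> where "\<rho> = inorm_inf A"
  define G where "G = (\<lambda>z. z - Y *v F z)"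
  define M where "M = (\<lambda>z. mat 1 - Y ** JF z)"
  have JFI_valid: "imat_valid (JFI I)" and JF_mem: "\<And>z. vmem z I \<Longrightarrow> mmem (JF z) (JFI I)"
    using assms(4) valid unfolding mat_enclosure_def by auto
  have M_mem: "mmem (M z) A" if "vmem z I" for z
    unfolding M_def A_def mid_def
    by (intro mmem_sub mmem_mpt mmem_mm JF_mem that)
  have A_cb: "cb (A $ i $ j)" for i j
    unfolding A_def msub_def mid_def mpt_def mmmul_def
    using JFI_valid unfolding imat_valid_def
    by (simp, intro cb_sub cb_cpt cb_csum cb_mul) (auto intro: cb_cint)
  obtain K where K: "\<And>B. mmem B A \<Longrightarrow> \<forall>i j. cmod (B $ i $ j) \<le> K"
    using mat_bound[of A, OF A_cb] by blast
  have M_op: "opnorm_inf (M z) \<le> \<rho>" if "vmem z I" for z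
    unfolding \<rho>_def inorm_inf_def
  proof (rule cSup_upper)
    show "opnorm_inf (M z) \<in> {opnorm_inf B |B. mmem B A}" using M_mem[OF that] by blast
    show "bdd_above {opnorm_inf B |B. mmem B A}"
      unfolding bdd_above_def using K opnorm_le by blast
  qed
  have mvt: "\<exists>t. 0 < t \<and> t < 1 \<and> L ((G b - G a) $ i) = L ((M (a + t *\<^sub>R (b - a)) *v (b - a)) $ i)"
    if "bounded_linear L" for L :: "complex \<Rightarrow> real" and a b i
    using mvt_comp[OF jac that, of b Y a i] unfolding G_def M_def by simp
  have seg: "vmem (a + t *\<^sub>R (b - a)) I" if "vmem a I" "vmem b I" "0 < t" "t < 1" for a b t
    using seg_mem[OF valid that(1,2)] that(3,4) by simp
  have FIxt: "vmem (F xt) (FI (vpt xt))"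
  proof -
    have r: "is_rint {r}" for r :: real
      unfolding is_rint_def by (rule exI[of _ r], rule exI[of _ r]) simp
    have "ivec_valid (vpt xt)"
      unfolding ivec_valid_def vpt_def is_cint_def cpt_def by (simp add: r)
    then show ?thesis using assms(3) vmem_vpt[of xt] unfolding vec_enclosure_def by blast
  qed
  define P where "P = vsub (vpt xt) (mvmul (mpt Y) (FI (vpt xt)))"
  define Q where "Q = mvmul A (vsub I (vpt xt))"
  have P: "vmem (G xt) P" unfolding G_def P_def
    by (intro vmem_sub vmem_vpt vmem_mv mmem_mpt FIxt)
  have KP: "krawczyk FI JFI xt Y I = vadd P Q"
    unfolding krawczyk_def P_def Q_def A_def ..
  have inv: "vmem (G z) I" if z: "vmem z I" for z
    unfolding vmem_def cmem_def
  proof (intro allI conjI)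
    fix i
    have Gz: "G z = G xt + (G z - G xt)" by simp
    obtain t where t: "0 < t" "t < 1" "Re ((G z - G xt) $ i) = Re ((M (xt + t *\<^sub>R (z - xt)) *v (z - xt)) $ i)"
      using mvt[OF bounded_linear_Re] by blast
    have "vmem (M (xt + t *\<^sub>R (z - xt)) *v (z - xt)) Q"
      unfolding Q_def using seg[OF assms(6) z t(1,2)]
      by (intro vmem_mv M_mem vmem_sub z vmem_vpt)
    then have q: "Re ((G z - G xt) $ i) \<in> fst (Q $ i)"
      using t(3) unfolding vmem_def cmem_def by simp
    have p: "Re ((G xt) $ i) \<in> fst (P $ i)" using P unfolding vmem_def cmem_def by simp
    have "Re ((G xt) $ i) + Re ((G z - G xt) $ i) \<in> fst (krawczyk FI JFI xt Y I $ i)"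
      unfolding KP vadd_def cadd_def radd_def using p q
      by (simp, intro exI[of _ "Re (G xt $ i)"] exI[of _ "Re (G z $ i) - Re (G xt $ i)"]) simp
    then show "Re (G z $ i) \<in> fst (I $ i)" using assms(8) unfolding ivec_subset_def by auto
    obtain s where s: "0 < s" "s < 1" "Im ((G z - G xt) $ i) = Im ((M (xt + s *\<^sub>R (z - xt)) *v (z - xt)) $ i)"
      using mvt[OF bounded_linear_Im] by blast
    have "vmem (M (xt + s *\<^sub>R (z - xt)) *v (z - xt)) Q"
      unfolding Q_def using seg[OF assms(6) z s(1,2)]
      by (intro vmem_mv M_mem vmem_sub z vmem_vpt)
    then have q: "Im ((G z - G xt) $ i) \<in> snd (Q $ i)"
      using s(3) unfolding vmem_def cmem_def by simp
    have p: "Im ((G xt) $ i) \<in> snd (P $ i)" using P unfolding vmem_def cmem_def by simp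
    have "Im ((G xt) $ i) + Im ((G z - G xt) $ i) \<in> snd (krawczyk FI JFI xt Y I $ i)"
      unfolding KP vadd_def cadd_def radd_def using p q
      by (simp, intro exI[of _ "Im (G xt $ i)"] exI[of _ "Im (G z $ i) - Im (G xt $ i)"]) simp
    then show "Im (G z $ i) \<in> snd (I $ i)" using assms(8) unfolding ivec_subset_def by auto
  qed
  have Gstar: "G xstar = xstar" unfolding G_def using assms(11) by simp
  have comp_bound: "\<bar>L ((G z - G xstar) $ i)\<bar> \<le> \<rho> * vnorm_inf (z - xstar)"
    if z: "vmem z I" and L: "bounded_linear L" and Lb: "\<And>w. \<bar>L w\<bar> \<le> cmod w"
    for z i and L :: "complex \<Rightarrow> real"
  proof -
    obtain t where t: "0 < t" "t < 1" "L ((G z - G xstar) $ i) = L ((M (xstar + t *\<^sub>R (z - xstar)) *v (z - xstar)) $ i)"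
      using mvt[OF L] by blast
    let ?M = "M (xstar + t *\<^sub>R (z - xstar))"
    have zm: "vmem (xstar + t *\<^sub>R (z - xstar)) I" using seg[OF assms(10) z t(1,2)] .
    have "\<bar>L ((G z - G xstar) $ i)\<bar> \<le> cmod ((?M *v (z - xstar)) $ i)" using t(3) Lb by simp
    also have "\<dots> \<le> vnorm_inf (?M *v (z - xstar))" by (rule vnorm_ge)
    also have "\<dots> \<le> opnorm_inf ?M * vnorm_inf (z - xstar)" by (rule opnorm_bound)
    also have "\<dots> \<le> \<rho> * vnorm_inf (z - xstar)"
      by (intro mult_right_mono M_op zm vnorm_nonneg)
    finally show ?thesis .
  qed
  define c where "c = max 0 (sqrt 2 * \<rho>)"
  have c: "0 \<le> c" "c < 1" using assms(9) unfolding c_def \<rho>_def A_def by auto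
  have contr: "vnorm_inf (G z - xstar) \<le> c * vnorm_inf (z - xstar)" if z: "vmem z I" for z
  proof (rule vnorm_le)
    fix i
    have "cmod ((G z - G xstar) $ i) \<le> sqrt 2 * (\<rho> * vnorm_inf (z - xstar))"
      by (rule cmod_le_sqrt2; rule comp_bound[OF z])
         (auto simp: bounded_linear_Re bounded_linear_Im abs_Re_le_cmod abs_Im_le_cmod)
    also have "\<dots> \<le> c * vnorm_inf (z - xstar)"
      unfolding c_def mult.assoc[symmetric] by (intro mult_right_mono vnorm_nonneg) auto
    finally show "cmod ((G z - xstar) $ i) \<le> c * vnorm_inf (z - xstar)" using Gstar by simp
  qed
  have main: "vmem (xs n) I \<and> vnorm_inf (xs n - xstar) \<le> vnorm_inf (x - xstar) * c ^ n" for n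
  proof (induction n)
    case 0 then show ?case using assms(12,13) by simp
  next
    case (Suc n)
    have e: "xs (Suc n) = G (xs n)" using assms(14) unfolding G_def by simp
    have "vnorm_inf (G (xs n) - xstar) \<le> c * vnorm_inf (xs n - xstar)" using contr Suc by blast
    also have "\<dots> \<le> c * (vnorm_inf (x - xstar) * c ^ n)" using Suc c by (intro mult_left_mono) auto
    finally show ?case using inv Suc e by (simp add: algebra_simps)
  qed
  have lim: "xs \<longlonglongrightarrow> xstar"
  proof -
    have "(\<lambda>n. xs n - xstar) \<longlonglongrightarrow> 0"
    proof (rule Lim_null_comparison)
      show "\<forall>\<^sub>F n in sequentially. norm (xs n - xstar) \<le> real CARD('n) * (vnorm_inf (x - xstar) * c ^ n)"
      proof (intro always_eventually allI)
        fix n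
        have "norm (xs n - xstar) \<le> (\<Sum>i\<in>UNIV. cmod ((xs n - xstar) $ i))"
          unfolding norm_vec_def by (rule L2_set_le_sum) simp
        also have "\<dots> \<le> (\<Sum>i\<in>(UNIV::'n set). vnorm_inf (x - xstar) * c ^ n)"
        proof (rule sum_mono)
          fix i
          have "cmod ((xs n - xstar) $ i) \<le> vnorm_inf (xs n - xstar)" by (rule vnorm_ge)
          then show "cmod ((xs n - xstar) $ i) \<le> vnorm_inf (x - xstar) * c ^ n"
            using main[of n] by simp
        qed
        finally show "norm (xs n - xstar) \<le> real CARD('n) * (vnorm_inf (x - xstar) * c ^ n)" by simp
      qed
      show "(\<lambda>n. real CARD('n) * (vnorm_inf (x - xstar) * c ^ n)) \<longlonglongrightarrow> 0"
        using c by (auto intro!: tendsto_mult_right_zero LIMSEQ_power_zero)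
    qed
    then show ?thesis using Lim_null by blast
  qed
  show ?thesis
    using lim c main by (intro conjI exI[of _ c] exI[of _ "vnorm_inf (x - xstar)"]) (auto simp: mult.commute)
qed

end
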